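(* Let $H$ be any graph obtained from $F_4$ by splitting a vertex. Then $H$ contains $K_{3,4}$ as a minor.
   Context: $F_4$ is the graph with vertex set $\{f^1,f^2\}\cup\{f^i_j: i\in\{1,2\}, j\in\{1,2,3,4\}\}$ and the 16 edges: for each $i\in\{1,2\}$, $f^if^i_1$, $f^if^i_2$, $f^if^i_4$, $f^i_3f^i_1$, $f^i_3f^i_2$, $f^i_3f^i_4$; and $f^1_jf^2_{5-j}$ for $j=1,2,3,4$. Splitting a vertex $v$ of a graph means: delete $v$, add two new adjacent vertices $v_1,v_2$, and join each neighbour of $v$ to exactly one of $v_1,v_2$, so that each of $v_1,v_2$ is joined to at least two neighbours of $v$. *)

theory Defs
  imports Main
begin

text \<open>Finite simple graphs are given by a vertex set V and an edge set E of
  two-element subsets of V.\<close>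

definition nbrs :: "'a set set \<Rightarrow> 'a \<Rightarrow> 'a set" where
  "nbrs E v = {u. {u, v} \<in> E}"

definition connected_in :: "'a set set \<Rightarrow> 'a set \<Rightarrow> bool" where
  "connected_in E S \<longleftrightarrow>
     (\<forall>x\<in>S. \<forall>y\<in>S. (\<lambda>a b. a \<in> S \<and> b \<in> S \<and> {a, b} \<in> E)\<^sup>*\<^sup>* x y)"

definition has_minor :: "'a set \<Rightarrow> 'a set set \<Rightarrow> 'b set \<Rightarrow> 'b set set \<Rightarrow> bool" where
  "has_minor VH EH VK EK \<longleftrightarrow>
     (\<exists>\<phi> :: 'b \<Rightarrow> 'a set.
        (\<forall>x\<in>VK. \<phi> x \<noteq> {} \<and> \<phi> x \<subseteq> VH \<and> connected_in EH (\<phi> x)) \<and>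
        (\<forall>x\<in>VK. \<forall>y\<in>VK. x \<noteq> y \<longrightarrow> \<phi> x \<inter> \<phi> y = {}) \<and>
        (\<forall>x y. {x, y} \<in> EK \<longrightarrow> (\<exists>a\<in>\<phi> x. \<exists>b\<in>\<phi> y. {a, b} \<in> EH)))"

definition Kbip_V :: "nat \<Rightarrow> nat \<Rightarrow> (nat + nat) set" where
  "Kbip_V m n = Inl ` {0..<m} \<union> Inr ` {0..<n}"

definition Kbip_E :: "nat \<Rightarrow> nat \<Rightarrow> (nat + nat) set set" where
  "Kbip_E m n = {{Inl i, Inr j} | i j. i < m \<and> j < n}"

text \<open>The graph F_4: F i is f^i, Fs i j is f^i_j.\<close>
datatype f4v = F nat | Fs nat nat

definition F4_V :: "f4v set" where
  "F4_V = {F 1, F 2} \<union> {Fs i j | i j. i \<in> {1, 2} \<and> j \<in> {1, 2, 3, 4}}"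

definition F4_E :: "f4v set set" where
  "F4_E = (\<Union>i\<in>{1, 2::nat}. {{F i, Fs i 1}, {F i, Fs i 2}, {F i, Fs i 4},
                             {Fs i 3, Fs i 1}, {Fs i 3, Fs i 2}, {Fs i 3, Fs i 4}})
          \<union> {{Fs 1 j, Fs 2 (5 - j)} | j. j \<in> {1, 2, 3, 4}}"

text \<open>Splitting vertex v: the old vertices u \<noteq> v become Inl u, the two new adjacent
  vertices are Inr True and Inr False; each neighbour u of v is joined to Inr (s u).\<close>
definition split_V :: "'a set \<Rightarrow> 'a \<Rightarrow> ('a + bool) set" where
  "split_V V v = Inl ` (V - {v}) \<union> {Inr True, Inr False}"

definition split_E :: "'a set set \<Rightarrow> 'a \<Rightarrow> ('a \<Rightarrow> bool) \<Rightarrow> ('a + bool) set set" where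
  "split_E E v s = {{Inr True, Inr False}} \<union> {Inl ` e | e. e \<in> E \<and> v \<notin> e}
                   \<union> {{Inl u, Inr (s u)} | u. u \<in> nbrs E v}"

end

theory Submission
  imports Defs
begin

lemma Kbip_V34: "Kbip_V 3 4 = {Inl 0, Inl 1, Inl 2, Inr 0, Inr 1, Inr 2, Inr 3}"
  by (auto simp: Kbip_V_def)

lemma less3: "(i::nat) < 3 \<longleftrightarrow> i = 0 \<or> i = 1 \<or> i = 2" by auto
lemma less4: "(i::nat) < 4 \<longleftrightarrow> i = 0 \<or> i = 1 \<or> i = 2 \<or> i = 3" by auto

lemma K34I:
  fixes Aa Ab Ac Ba Bb Bc Bd :: "'a set"
  assumes "Aa \<noteq> {}" "Aa \<subseteq> VH" "connected_in EH Aa"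
    and "Ab \<noteq> {}" "Ab \<subseteq> VH" "connected_in EH Ab"
    and "Ac \<noteq> {}" "Ac \<subseteq> VH" "connected_in EH Ac"
    and "Ba \<noteq> {}" "Ba \<subseteq> VH" "connected_in EH Ba"
    and "Bb \<noteq> {}" "Bb \<subseteq> VH" "connected_in EH Bb"
    and "Bc \<noteq> {}" "Bc \<subseteq> VH" "connected_in EH Bc"
    and "Bd \<noteq> {}" "Bd \<subseteq> VH" "connected_in EH Bd"
    and "Aa \<inter> Ab = {}"
    and "Aa \<inter> Ac = {}"
    and "Aa \<inter> Ba = {}"
    and "Aa \<inter> Bb = {}"
    and "Aa \<inter> Bc = {}"
    and "Aa \<inter> Bd = {}"
    and "Ab \<inter> Ac = {}"
    and "Ab \<inter> Ba = {}"
    and "Ab \<inter> Bb = {}"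
    and "Ab \<inter> Bc = {}"
    and "Ab \<inter> Bd = {}"
    and "Ac \<inter> Ba = {}"
    and "Ac \<inter> Bb = {}"
    and "Ac \<inter> Bc = {}"
    and "Ac \<inter> Bd = {}"
    and "Ba \<inter> Bb = {}"
    and "Ba \<inter> Bc = {}"
    and "Ba \<inter> Bd = {}"
    and "Bb \<inter> Bc = {}"
    and "Bb \<inter> Bd = {}"
    and "Bc \<inter> Bd = {}"
    and "\<exists>a\<in>Aa. \<exists>b\<in>Ba. {a, b} \<in> EH"
    and "\<exists>a\<in>Aa. \<exists>b\<in>Bb. {a, b} \<in> EH"
    and "\<exists>a\<in>Aa. \<exists>b\<in>Bc. {a, b} \<in> EH"
    and "\<exists>a\<in>Aa. \<exists>b\<in>Bd. {a, b} \<in> EH"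
    and "\<exists>a\<in>Ab. \<exists>b\<in>Ba. {a, b} \<in> EH"
    and "\<exists>a\<in>Ab. \<exists>b\<in>Bb. {a, b} \<in> EH"
    and "\<exists>a\<in>Ab. \<exists>b\<in>Bc. {a, b} \<in> EH"
    and "\<exists>a\<in>Ab. \<exists>b\<in>Bd. {a, b} \<in> EH"
    and "\<exists>a\<in>Ac. \<exists>b\<in>Ba. {a, b} \<in> EH"
    and "\<exists>a\<in>Ac. \<exists>b\<in>Bb. {a, b} \<in> EH"
    and "\<exists>a\<in>Ac. \<exists>b\<in>Bc. {a, b} \<in> EH"
    and "\<exists>a\<in>Ac. \<exists>b\<in>Bd. {a, b} \<in> EH"
  shows "has_minor VH EH (Kbip_V 3 4) (Kbip_E 3 4)"
proof -
  define \<phi> :: "nat + nat \<Rightarrow> 'a set" where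
    "\<phi> x = (case x of Inl i \<Rightarrow> (if i = 0 then Aa else if i = 1 then Ab else Ac)
       | Inr j \<Rightarrow> (if j = 0 then Ba else if j = 1 then Bb else if j = 2 then Bc else Bd))" for x
  have e: "\<exists>a\<in>\<phi> (Inl i). \<exists>b\<in>\<phi> (Inr j). {a, b} \<in> EH" if "i < 3" "j < 4" for i j
    using that assms unfolding less3 less4 \<phi>_def by auto
  have e2: "\<exists>a\<in>\<phi> (Inr j). \<exists>b\<in>\<phi> (Inl i). {a, b} \<in> EH" if "i < 3" "j < 4" for i j
    using e[OF that] by (metis insert_commute)
  show ?thesis
    unfolding has_minor_def
  proof (intro exI[of _ \<phi>] conjI allI impI ballI)
    fix x assume "x \<in> Kbip_V 3 4"
    then show "\<phi> x \<noteq> {}" "connected_in EH (\<phi> x)"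
      unfolding Kbip_V34 by (auto simp: \<phi>_def assms)
    from \<open>x \<in> Kbip_V 3 4\<close> show "\<phi> x \<subseteq> VH"
      unfolding Kbip_V34 using assms(2,5,8,11,14,17,20) by (auto simp: \<phi>_def)
  next
    fix x y assume "x \<in> Kbip_V 3 4" "y \<in> Kbip_V 3 4" "x \<noteq> y"
    then have hx: "x = Inl 0 \<or> x = Inl 1 \<or> x = Inl 2 \<or> x = Inr 0 \<or> x = Inr 1 \<or> x = Inr 2 \<or> x = Inr 3"
      and hy: "y = Inl 0 \<or> y = Inl 1 \<or> y = Inl 2 \<or> y = Inr 0 \<or> y = Inr 1 \<or> y = Inr 2 \<or> y = Inr 3"
      unfolding Kbip_V34 by auto
    show "\<phi> x \<inter> \<phi> y = {}"
      using hx hy \<open>x \<noteq> y\<close>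
      by (elim disjE) (simp_all add: \<phi>_def assms(22-42) assms(22-42)[THEN Int_commute[THEN trans]])
  next
    fix x y assume "{x, y} \<in> Kbip_E 3 4"
    then obtain i j where ij: "i < 3" "j < 4" "{x, y} = {Inl i, Inr j}"
      unfolding Kbip_E_def by auto
    then have "(x = Inl i \<and> y = Inr j) \<or> (x = Inr j \<and> y = Inl i)"
      by (auto simp: doubleton_eq_iff)
    then show "\<exists>a\<in>\<phi> x. \<exists>b\<in>\<phi> y. {a, b} \<in> EH"
      using e[OF ij(1,2)] e2[OF ij(1,2)] by auto
  qed
qed

lemma conn1: "connected_in E {a}"
  unfolding connected_in_def by simp

lemma conn2: "{a, b} \<in> E \<Longrightarrow> connected_in E {a, b}"
proof -
  assume ab: "{a, b} \<in> E"
  let ?R = "\<lambda>x y. x \<in> {a, b} \<and> y \<in> {a, b} \<and> {x, y} \<in> E"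
  have ab': "?R a b" "?R b a" using ab by (simp_all add: insert_commute)
  have "?R\<^sup>*\<^sup>* a b" using ab'(1) by (rule r_into_rtranclp)
  moreover have "?R\<^sup>*\<^sup>* b a" using ab'(2) by (rule r_into_rtranclp)
  ultimately show ?thesis unfolding connected_in_def by auto
qed

lemma conn3: "{a, b} \<in> E \<Longrightarrow> {b, c} \<in> E \<Longrightarrow> connected_in E {a, b, c}"
proof -
  assume ab: "{a, b} \<in> E" and bc: "{b, c} \<in> E"
  let ?R = "\<lambda>x y. x \<in> {a, b, c} \<and> y \<in> {a, b, c} \<and> {x, y} \<in> E"
  have ab': "?R a b" "?R b a" "?R b c" "?R c b" using ab bc by (simp_all add: insert_commute)
  have r1: "?R\<^sup>*\<^sup>* a b" using ab'(1) by (rule r_into_rtranclp)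
  have r2: "?R\<^sup>*\<^sup>* b a" using ab'(2) by (rule r_into_rtranclp)
  have r3: "?R\<^sup>*\<^sup>* b c" using ab'(3) by (rule r_into_rtranclp)
  have r4: "?R\<^sup>*\<^sup>* c b" using ab'(4) by (rule r_into_rtranclp)
  note r = r1 r2 r3 r4
  have "?R\<^sup>*\<^sup>* a c" using r(1,3) by (rule rtranclp_trans)
  moreover have "?R\<^sup>*\<^sup>* c a" using r(4,2) by (rule rtranclp_trans)
  ultimately show ?thesis using r unfolding connected_in_def by auto
qed

lemma split_E_mem: "X \<in> split_E E v s \<longleftrightarrow> X = {Inr True, Inr False}
   \<or> (\<exists>e. X = Inl ` e \<and> e \<in> E \<and> v \<notin> e) \<or> (\<exists>u. X = {Inl u, Inr (s u)} \<and> u \<in> nbrs E v)"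
  unfolding split_E_def by (simp only: Un_iff singleton_iff mem_Collect_eq disj_assoc)

lemma sE_ll: "{Inl a, Inl b} \<in> split_E E v s \<longleftrightarrow> {a, b} \<in> E \<and> a \<noteq> v \<and> b \<noteq> v"
proof -
  have 1: "{Inl a, Inl b} = Inl ` {a, b}" by simp
  have 2: "(Inl ` {a, b} = Inl ` e) \<longleftrightarrow> e = {a, b}" for e :: "'a set"
    by (metis inj_Inl inj_image_eq_iff)
  show ?thesis unfolding split_E_mem 1 2 by (auto simp: doubleton_eq_iff)
qed

lemma sE_lr: "{Inl u, Inr t} \<in> split_E E v s \<longleftrightarrow> {u, v} \<in> E \<and> s u = t"
proof -
  have "{Inl u, Inr t} \<noteq> Inl ` e" for e :: "'a set"
  proof
    assume "{Inl u, Inr t} = Inl ` e"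
    then have "Inr t \<in> Inl ` e" by (metis insertI1 insertI2)
    then show False by auto
  qed
  then show ?thesis unfolding split_E_mem by (auto simp: doubleton_eq_iff nbrs_def)
qed

lemma sE_rl: "{Inr t, Inl u} \<in> split_E E v s \<longleftrightarrow> {u, v} \<in> E \<and> s u = t"
  by (metis insert_commute sE_lr)

lemma sE_rr: "{Inr a, Inr b} \<in> split_E E v s \<longleftrightarrow> a \<noteq> b"
proof -
  have "{Inr a, Inr b} \<noteq> Inl ` e" for e :: "'a set"
  proof
    assume "{Inr a, Inr b} = Inl ` e"
    then have "Inr a \<in> Inl ` e" by (metis insertI1)
    then show False by auto
  qed
  moreover have "{Inr a, Inr b} = {Inr True, Inr False :: 'a + bool} \<longleftrightarrow> a \<noteq> b"
    by (cases a; cases b) (simp_all add: doubleton_eq_iff)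
  ultimately show ?thesis unfolding split_E_mem by (auto simp: doubleton_eq_iff)
qed

lemma F4_E_expl: "F4_E = {{Fs 1 1, Fs 2 4}, {Fs 1 2, Fs 2 3}, {Fs 1 3, Fs 2 2}, {Fs 1 4, Fs 2 1},
   {F 2, Fs 2 1}, {F 2, Fs 2 2}, {F 2, Fs 2 4},
   {Fs 2 3, Fs 2 1}, {Fs 2 3, Fs 2 2}, {Fs 2 3, Fs 2 4},
   {F 1, Fs 1 1}, {F 1, Fs 1 2}, {F 1, Fs 1 4},
   {Fs 1 3, Fs 1 1}, {Fs 1 3, Fs 1 2}, {Fs 1 3, Fs 1 4}}"
proof -
  have c: "{{Fs 1 j, Fs 2 (5 - j)} | j. j \<in> {1,2,3,4::nat}} = {{Fs 1 1, Fs 2 4}, {Fs 1 2, Fs 2 3}, {Fs 1 3, Fs 2 2}, {Fs 1 4, Fs 2 1}}"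
    unfolding Setcompr_eq_image by simp
  show ?thesis unfolding F4_E_def c by simp
qed
lemma F4_V_expl: "F4_V = {F 1, F 2, Fs 1 1, Fs 1 2, Fs 1 3, Fs 1 4, Fs 2 1, Fs 2 2, Fs 2 3, Fs 2 4}"
  apply (rule set_eqI)
  subgoal for x by (cases x) (auto simp: F4_V_def)
  done

lemmas F4_simps = F4_E_expl F4_V_expl split_V_def sE_ll sE_lr sE_rl sE_rr conn1 conn2 conn3
  doubleton_eq_iff

lemma case1: "s (Fs 1 1) \<Longrightarrow> s (Fs 1 2) \<Longrightarrow> \<not> s (Fs 1 4) \<Longrightarrow> \<not> s (Fs 2 2) \<Longrightarrow>
  has_minor (split_V F4_V (Fs 1 3)) (split_E F4_E (Fs 1 3) s) (Kbip_V 3 4) (Kbip_E 3 4)"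
  apply (rule K34I[where Aa="{Inl (Fs 1 2), Inl (Fs 2 3)}" and Ab="{Inr False, Inl (Fs 1 4)}" and Ac="{Inl (F 2), Inl (Fs 2 4), Inl (Fs 1 1)}" and Ba="{Inl (Fs 2 1)}" and Bb="{Inl (F 1)}" and Bc="{Inr True}" and Bd="{Inl (Fs 2 2)}"])
  by (simp_all add: F4_simps)

lemma case2: "s (Fs 1 1) \<Longrightarrow> \<not> s (Fs 1 2) \<Longrightarrow> s (Fs 1 4) \<Longrightarrow> \<not> s (Fs 2 2) \<Longrightarrow>
  has_minor (split_V F4_V (Fs 1 3)) (split_E F4_E (Fs 1 3) s) (Kbip_V 3 4) (Kbip_E 3 4)"
  apply (rule K34I[where Aa="{Inl (Fs 1 2), Inr False}" and Ab="{Inl (Fs 2 1), Inl (Fs 1 4)}" and Ac="{Inl (Fs 1 1), Inl (Fs 2 4)}" and Ba="{Inl (Fs 2 3)}" and Bb="{Inl (F 1)}" and Bc="{Inr True}" and Bd="{Inl (F 2), Inl (Fs 2 2)}"])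
  by (simp_all add: F4_simps)

lemma case3: "s (Fs 1 1) \<Longrightarrow> \<not> s (Fs 1 2) \<Longrightarrow> \<not> s (Fs 1 4) \<Longrightarrow> s (Fs 2 2) \<Longrightarrow>
  has_minor (split_V F4_V (Fs 1 3)) (split_E F4_E (Fs 1 3) s) (Kbip_V 3 4) (Kbip_E 3 4)"
  apply (rule K34I[where Aa="{Inl (Fs 1 1), Inr True}" and Ab="{Inl (Fs 1 2), Inl (Fs 2 3)}" and Ac="{Inl (F 2), Inl (Fs 2 1), Inl (Fs 1 4)}" and Ba="{Inl (F 1)}" and Bb="{Inr False}" and Bc="{Inl (Fs 2 2)}" and Bd="{Inl (Fs 2 4)}"])
  by (simp_all add: F4_simps)

lemma case4: "\<not> s (Fs 1 1) \<Longrightarrow> s (Fs 1 2) \<Longrightarrow> s (Fs 1 4) \<Longrightarrow> \<not> s (Fs 2 2) \<Longrightarrow>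
  has_minor (split_V F4_V (Fs 1 3)) (split_E F4_E (Fs 1 3) s) (Kbip_V 3 4) (Kbip_E 3 4)"
  apply (rule K34I[where Aa="{Inl (Fs 1 1), Inr False}" and Ab="{Inl (Fs 1 2), Inl (Fs 2 3)}" and Ac="{Inl (F 2), Inl (Fs 2 1), Inl (Fs 1 4)}" and Ba="{Inl (F 1)}" and Bb="{Inr True}" and Bc="{Inl (Fs 2 2)}" and Bd="{Inl (Fs 2 4)}"])
  by (simp_all add: F4_simps)

lemma case5: "\<not> s (Fs 1 1) \<Longrightarrow> s (Fs 1 2) \<Longrightarrow> \<not> s (Fs 1 4) \<Longrightarrow> s (Fs 2 2) \<Longrightarrow>
  has_minor (split_V F4_V (Fs 1 3)) (split_E F4_E (Fs 1 3) s) (Kbip_V 3 4) (Kbip_E 3 4)"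
  apply (rule K34I[where Aa="{Inr True, Inl (Fs 2 2)}" and Ab="{Inl (Fs 2 1), Inl (Fs 1 4)}" and Ac="{Inl (Fs 1 1), Inl (Fs 2 4)}" and Ba="{Inl (F 2)}" and Bb="{Inl (Fs 2 3)}" and Bc="{Inr False}" and Bd="{Inl (Fs 1 2), Inl (F 1)}"])
  by (simp_all add: F4_simps)

lemma case6: "\<not> s (Fs 1 1) \<Longrightarrow> \<not> s (Fs 1 2) \<Longrightarrow> s (Fs 1 4) \<Longrightarrow> s (Fs 2 2) \<Longrightarrow>
  has_minor (split_V F4_V (Fs 1 3)) (split_E F4_E (Fs 1 3) s) (Kbip_V 3 4) (Kbip_E 3 4)"
  apply (rule K34I[where Aa="{Inl (Fs 1 2), Inl (Fs 2 3)}" and Ab="{Inr True, Inl (Fs 1 4)}" and Ac="{Inl (F 2), Inl (Fs 2 4), Inl (Fs 1 1)}" and Ba="{Inl (Fs 2 1)}" and Bb="{Inl (F 1)}" and Bc="{Inr False}" and Bd="{Inl (Fs 2 2)}"])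
  by (simp_all add: F4_simps)

lemma case7: "s (Fs 2 1) \<Longrightarrow> s (Fs 2 2) \<Longrightarrow> \<not> s (Fs 2 4) \<Longrightarrow> \<not> s (Fs 1 2) \<Longrightarrow>
  has_minor (split_V F4_V (Fs 2 3)) (split_E F4_E (Fs 2 3) s) (Kbip_V 3 4) (Kbip_E 3 4)"
  apply (rule K34I[where Aa="{Inl (Fs 1 3), Inl (Fs 2 2)}" and Ab="{Inl (Fs 2 4), Inr False}" and Ac="{Inl (Fs 2 1), Inl (Fs 1 4), Inl (F 1)}" and Ba="{Inl (F 2)}" and Bb="{Inr True}" and Bc="{Inl (Fs 1 1)}" and Bd="{Inl (Fs 1 2)}"])
  by (simp_all add: F4_simps)

lemma case8: "s (Fs 2 1) \<Longrightarrow> \<not> s (Fs 2 2) \<Longrightarrow> s (Fs 2 4) \<Longrightarrow> \<not> s (Fs 1 2) \<Longrightarrow>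
  has_minor (split_V F4_V (Fs 2 3)) (split_E F4_E (Fs 2 3) s) (Kbip_V 3 4) (Kbip_E 3 4)"
  apply (rule K34I[where Aa="{Inl (Fs 1 2), Inr False}" and Ab="{Inl (Fs 2 1), Inl (Fs 1 4)}" and Ac="{Inl (Fs 1 1), Inl (Fs 2 4)}" and Ba="{Inl (F 1)}" and Bb="{Inr True}" and Bc="{Inl (Fs 1 3)}" and Bd="{Inl (F 2), Inl (Fs 2 2)}"])
  by (simp_all add: F4_simps)

lemma case9: "s (Fs 2 1) \<Longrightarrow> \<not> s (Fs 2 2) \<Longrightarrow> \<not> s (Fs 2 4) \<Longrightarrow> s (Fs 1 2) \<Longrightarrow>
  has_minor (split_V F4_V (Fs 2 3)) (split_E F4_E (Fs 2 3) s) (Kbip_V 3 4) (Kbip_E 3 4)"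
  apply (rule K34I[where Aa="{Inl (Fs 1 3), Inl (Fs 2 2)}" and Ab="{Inr True, Inl (Fs 2 1)}" and Ac="{Inl (Fs 2 4), Inl (Fs 1 1), Inl (F 1)}" and Ba="{Inl (F 2)}" and Bb="{Inl (Fs 1 4)}" and Bc="{Inr False}" and Bd="{Inl (Fs 1 2)}"])
  by (simp_all add: F4_simps)

lemma case10: "\<not> s (Fs 2 1) \<Longrightarrow> s (Fs 2 2) \<Longrightarrow> s (Fs 2 4) \<Longrightarrow> \<not> s (Fs 1 2) \<Longrightarrow>
  has_minor (split_V F4_V (Fs 2 3)) (split_E F4_E (Fs 2 3) s) (Kbip_V 3 4) (Kbip_E 3 4)"
  apply (rule K34I[where Aa="{Inl (Fs 1 3), Inl (Fs 2 2)}" and Ab="{Inr False, Inl (Fs 2 1)}" and Ac="{Inl (Fs 2 4), Inl (Fs 1 1), Inl (F 1)}" and Ba="{Inl (F 2)}" and Bb="{Inl (Fs 1 4)}" and Bc="{Inr True}" and Bd="{Inl (Fs 1 2)}"])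
  by (simp_all add: F4_simps)

lemma case11: "\<not> s (Fs 2 1) \<Longrightarrow> s (Fs 2 2) \<Longrightarrow> \<not> s (Fs 2 4) \<Longrightarrow> s (Fs 1 2) \<Longrightarrow>
  has_minor (split_V F4_V (Fs 2 3)) (split_E F4_E (Fs 2 3) s) (Kbip_V 3 4) (Kbip_E 3 4)"
  apply (rule K34I[where Aa="{Inr True, Inl (Fs 2 2)}" and Ab="{Inl (Fs 2 1), Inl (Fs 1 4)}" and Ac="{Inl (Fs 1 1), Inl (Fs 2 4)}" and Ba="{Inl (F 2)}" and Bb="{Inr False}" and Bc="{Inl (Fs 1 3)}" and Bd="{Inl (Fs 1 2), Inl (F 1)}"])
  by (simp_all add: F4_simps)

lemma case12: "\<not> s (Fs 2 1) \<Longrightarrow> \<not> s (Fs 2 2) \<Longrightarrow> s (Fs 2 4) \<Longrightarrow> s (Fs 1 2) \<Longrightarrow>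
  has_minor (split_V F4_V (Fs 2 3)) (split_E F4_E (Fs 2 3) s) (Kbip_V 3 4) (Kbip_E 3 4)"
  apply (rule K34I[where Aa="{Inl (Fs 1 3), Inl (Fs 2 2)}" and Ab="{Inl (Fs 2 4), Inr True}" and Ac="{Inl (Fs 2 1), Inl (Fs 1 4), Inl (F 1)}" and Ba="{Inl (F 2)}" and Bb="{Inr False}" and Bc="{Inl (Fs 1 1)}" and Bd="{Inl (Fs 1 2)}"])
  by (simp_all add: F4_simps)

lemma filt_insert: "{u \<in> insert a A. P u} = (if P a then insert a {u \<in> A. P u} else {u \<in> A. P u})"
  by auto

lemma filt_empty: "{u \<in> {}. P u} = {}"
  by auto

lemma card_split:
  assumes "finite N"
  shows "card {u \<in> N. s u} + card {u \<in> N. \<not> s u} = card N"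
proof -
  have "N = {u \<in> N. s u} \<union> {u \<in> N. \<not> s u}" by auto
  moreover have "card ({u \<in> N. s u} \<union> {u \<in> N. \<not> s u}) = card {u \<in> N. s u} + card {u \<in> N. \<not> s u}"
    by (rule card_Un_disjoint) (use assms in auto)
  ultimately show ?thesis by simp
qed

lemma deg3_False:
  assumes "finite N" "card N \<le> 3" "card {u \<in> N. s u} \<ge> 2" "card {u \<in> N. \<not> s u} \<ge> 2"
  shows False
  using card_split[OF assms(1), of s] assms(2-4) by linarith

lemma nbrs_F1: "nbrs F4_E (F 1) = {Fs 1 1, Fs 1 2, Fs 1 4}"
  apply (rule set_eqI)
  subgoal for u by (cases u) (auto simp: nbrs_def F4_E_expl doubleton_eq_iff)
  done

lemma nbrs_F2: "nbrs F4_E (F 2) = {Fs 2 1, Fs 2 2, Fs 2 4}"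
  apply (rule set_eqI)
  subgoal for u by (cases u) (auto simp: nbrs_def F4_E_expl doubleton_eq_iff)
  done

lemma nbrs_Fs11: "nbrs F4_E (Fs 1 1) = {F 1, Fs 1 3, Fs 2 4}"
  apply (rule set_eqI)
  subgoal for u by (cases u) (auto simp: nbrs_def F4_E_expl doubleton_eq_iff)
  done

lemma nbrs_Fs12: "nbrs F4_E (Fs 1 2) = {F 1, Fs 1 3, Fs 2 3}"
  apply (rule set_eqI)
  subgoal for u by (cases u) (auto simp: nbrs_def F4_E_expl doubleton_eq_iff)
  done

lemma nbrs_Fs13: "nbrs F4_E (Fs 1 3) = {Fs 1 1, Fs 1 2, Fs 1 4, Fs 2 2}"
  apply (rule set_eqI)
  subgoal for u by (cases u) (auto simp: nbrs_def F4_E_expl doubleton_eq_iff)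
  done

lemma nbrs_Fs14: "nbrs F4_E (Fs 1 4) = {F 1, Fs 1 3, Fs 2 1}"
  apply (rule set_eqI)
  subgoal for u by (cases u) (auto simp: nbrs_def F4_E_expl doubleton_eq_iff)
  done

lemma nbrs_Fs21: "nbrs F4_E (Fs 2 1) = {F 2, Fs 2 3, Fs 1 4}"
  apply (rule set_eqI)
  subgoal for u by (cases u) (auto simp: nbrs_def F4_E_expl doubleton_eq_iff)
  done

lemma nbrs_Fs22: "nbrs F4_E (Fs 2 2) = {F 2, Fs 2 3, Fs 1 3}"
  apply (rule set_eqI)
  subgoal for u by (cases u) (auto simp: nbrs_def F4_E_expl doubleton_eq_iff)
  done

lemma nbrs_Fs23: "nbrs F4_E (Fs 2 3) = {Fs 2 1, Fs 2 2, Fs 2 4, Fs 1 2}"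
  apply (rule set_eqI)
  subgoal for u by (cases u) (auto simp: nbrs_def F4_E_expl doubleton_eq_iff)
  done

lemma nbrs_Fs24: "nbrs F4_E (Fs 2 4) = {F 2, Fs 2 3, Fs 1 1}"
  apply (rule set_eqI)
  subgoal for u by (cases u) (auto simp: nbrs_def F4_E_expl doubleton_eq_iff)
  done

lemma v13:
  assumes "card {u \<in> nbrs F4_E (Fs 1 3). s u} \<ge> 2" "card {u \<in> nbrs F4_E (Fs 1 3). \<not> s u} \<ge> 2"
  shows "has_minor (split_V F4_V (Fs 1 3)) (split_E F4_E (Fs 1 3) s) (Kbip_V 3 4) (Kbip_E 3 4)"
proof -
  note A = assms[unfolded nbrs_Fs13 filt_insert filt_empty]
  show ?thesis
    apply (cases "s (Fs 1 1)"; cases "s (Fs 1 2)"; cases "s (Fs 1 4)"; cases "s (Fs 2 2)"; insert A)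
    apply ((rule case1 case2 case3 case4 case5 case6; assumption) | (rule FalseE, simp))
    apply ((rule case1 case2 case3 case4 case5 case6; assumption) | (rule FalseE, simp))
    apply ((rule case1 case2 case3 case4 case5 case6; assumption) | (rule FalseE, simp))
    apply ((rule case1 case2 case3 case4 case5 case6; assumption) | (rule FalseE, simp))
    apply ((rule case1 case2 case3 case4 case5 case6; assumption) | (rule FalseE, simp))
    apply ((rule case1 case2 case3 case4 case5 case6; assumption) | (rule FalseE, simp))
    apply ((rule case1 case2 case3 case4 case5 case6; assumption) | (rule FalseE, simp))
    apply ((rule case1 case2 case3 case4 case5 case6; assumption) | (rule FalseE, simp))
    apply ((rule case1 case2 case3 case4 case5 case6; assumption) | (rule FalseE, simp))
    apply ((rule case1 case2 case3 case4 case5 case6; assumption) | (rule FalseE, simp))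
    apply ((rule case1 case2 case3 case4 case5 case6; assumption) | (rule FalseE, simp))
    apply ((rule case1 case2 case3 case4 case5 case6; assumption) | (rule FalseE, simp))
    apply ((rule case1 case2 case3 case4 case5 case6; assumption) | (rule FalseE, simp))
    apply ((rule case1 case2 case3 case4 case5 case6; assumption) | (rule FalseE, simp))
    apply ((rule case1 case2 case3 case4 case5 case6; assumption) | (rule FalseE, simp))
    apply ((rule case1 case2 case3 case4 case5 case6; assumption) | (rule FalseE, simp))
    done
qed

lemma v23:
  assumes "card {u \<in> nbrs F4_E (Fs 2 3). s u} \<ge> 2" "card {u \<in> nbrs F4_E (Fs 2 3). \<not> s u} \<ge> 2"
  shows "has_minor (split_V F4_V (Fs 2 3)) (split_E F4_E (Fs 2 3) s) (Kbip_V 3 4) (Kbip_E 3 4)"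
proof -
  note A = assms[unfolded nbrs_Fs23 filt_insert filt_empty]
  show ?thesis
    apply (cases "s (Fs 2 1)"; cases "s (Fs 2 2)"; cases "s (Fs 2 4)"; cases "s (Fs 1 2)"; insert A)
    apply ((rule case7 case8 case9 case10 case11 case12; assumption) | (rule FalseE, simp))
    apply ((rule case7 case8 case9 case10 case11 case12; assumption) | (rule FalseE, simp))
    apply ((rule case7 case8 case9 case10 case11 case12; assumption) | (rule FalseE, simp))
    apply ((rule case7 case8 case9 case10 case11 case12; assumption) | (rule FalseE, simp))
    apply ((rule case7 case8 case9 case10 case11 case12; assumption) | (rule FalseE, simp))
    apply ((rule case7 case8 case9 case10 case11 case12; assumption) | (rule FalseE, simp))
    apply ((rule case7 case8 case9 case10 case11 case12; assumption) | (rule FalseE, simp))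
    apply ((rule case7 case8 case9 case10 case11 case12; assumption) | (rule FalseE, simp))
    apply ((rule case7 case8 case9 case10 case11 case12; assumption) | (rule FalseE, simp))
    apply ((rule case7 case8 case9 case10 case11 case12; assumption) | (rule FalseE, simp))
    apply ((rule case7 case8 case9 case10 case11 case12; assumption) | (rule FalseE, simp))
    apply ((rule case7 case8 case9 case10 case11 case12; assumption) | (rule FalseE, simp))
    apply ((rule case7 case8 case9 case10 case11 case12; assumption) | (rule FalseE, simp))
    apply ((rule case7 case8 case9 case10 case11 case12; assumption) | (rule FalseE, simp))
    apply ((rule case7 case8 case9 case10 case11 case12; assumption) | (rule FalseE, simp))
    apply ((rule case7 case8 case9 case10 case11 case12; assumption) | (rule FalseE, simp))
    done
qed

theorem lemma4p10:
  fixes v :: f4v and s :: "f4v \<Rightarrow> bool"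
  assumes "v \<in> F4_V"
    and "card {u \<in> nbrs F4_E v. s u} \<ge> 2"
    and "card {u \<in> nbrs F4_E v. \<not> s u} \<ge> 2"
  shows "has_minor (split_V F4_V v) (split_E F4_E v s) (Kbip_V 3 4) (Kbip_E 3 4)"
proof -
  consider "v = F 1" | "v = F 2" | "v = Fs 1 1" | "v = Fs 1 2" | "v = Fs 1 3" | "v = Fs 1 4" | "v = Fs 2 1" | "v = Fs 2 2" | "v = Fs 2 3" | "v = Fs 2 4"
    using assms(1) unfolding F4_V_expl by blast
  then show ?thesis
  proof cases

    case 1
    have "finite (nbrs F4_E v)" "card (nbrs F4_E v) \<le> 3" unfolding 1 nbrs_F1 by simp_all
    then show ?thesis using deg3_False assms(2,3) by blast

  next

    case 2
    have "finite (nbrs F4_E v)" "card (nbrs F4_E v) \<le> 3" unfolding 2 nbrs_F2 by simp_all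
    then show ?thesis using deg3_False assms(2,3) by blast

  next

    case 3
    have "finite (nbrs F4_E v)" "card (nbrs F4_E v) \<le> 3" unfolding 3 nbrs_Fs11 by simp_all
    then show ?thesis using deg3_False assms(2,3) by blast

  next

    case 4
    have "finite (nbrs F4_E v)" "card (nbrs F4_E v) \<le> 3" unfolding 4 nbrs_Fs12 by simp_all
    then show ?thesis using deg3_False assms(2,3) by blast

  next

    case 5
    show ?thesis using v13[OF assms(2,3)[unfolded 5]] unfolding 5 .

  next

    case 6
    have "finite (nbrs F4_E v)" "card (nbrs F4_E v) \<le> 3" unfolding 6 nbrs_Fs14 by simp_all
    then show ?thesis using deg3_False assms(2,3) by blast

  next

    case 7
    have "finite (nbrs F4_E v)" "card (nbrs F4_E v) \<le> 3" unfolding 7 nbrs_Fs21 by simp_all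
    then show ?thesis using deg3_False assms(2,3) by blast

  next

    case 8
    have "finite (nbrs F4_E v)" "card (nbrs F4_E v) \<le> 3" unfolding 8 nbrs_Fs22 by simp_all
    then show ?thesis using deg3_False assms(2,3) by blast

  next

    case 9
    show ?thesis using v23[OF assms(2,3)[unfolded 9]] unfolding 9 .

  next

    case 10
    have "finite (nbrs F4_E v)" "card (nbrs F4_E v) \<le> 3" unfolding 10 nbrs_Fs24 by simp_all
    then show ?thesis using deg3_False assms(2,3) by blast

  qed
qed

end
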